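(* Let $D$ be a tournament missing disjoint paths of length 2 and let $C=a_1b_1c_1,\dots,a_kb_kc_k$ be a double cycle in $\Delta(D)$. Writing $v^-$ and $v^{++}$ for $N^-_{D[K(C)]}(v)$ and $N^{++}_{D[K(C)]}(v)$, for every $t\in\{1,\dots,k\}$ (indices modulo $k$): (1) $a_t^{++}=(a_t^-\cup\{b_t\})\setminus\{a_{t+1},b_{t+1},c_{t+1},c_t\}$; (2) $c_t^{++}=(c_t^-\cup\{b_t\})\setminus\{a_{t+1},b_{t+1},c_{t+1},a_t\}$; (3) $b_t^{++}=(b_t^-\cup\{a_t,c_t\})\setminus\{a_{t+1},b_{t+1},c_{t+1}\}$.
   Context: All digraphs are finite oriented graphs; $D[X]$ is the induced subdigraph. $N^+_H(v)$, $N^-_H(v)$ are out/in-neighborhoods in $H$; $N^{++}_H(v)$ is the set of vertices $w\notin N_H^+(v)\cup\{v\}$ with $u\to w$ in $H$ for some $u\in N_H^+(v)$. A missing edge is a pair of distinct non-adjacent vertices; the missing graph is formed by the missing edges. $D$ is a tournament missing disjoint paths of length 2 if its missing graph is a vertex-disjoint union of paths each with exactly two edges. For missing edges $\{x,y\},\{a,b\}$, $\{x,y\}$ loses to $\{a,b\}$ (written $xy\to ab$) if the endpoints can be labelled so that $x\to a$, $b\notin N^+(x)\cup N^{++}(x)$, $y\to b$, $a\notin N^+(y)\cup N^{++}(y)$ (neighborhoods in $D$). $\Delta(D)$ has the missing edges as vertices and arcs $(e,e')$ whenever $e$ loses to $e'$. For missing paths $abc$, $xyz$, $abc\to xyz$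 means each of $ab,bc$ loses to each of $xy,yz$. A double cycle is a sequence $C=a_1b_1c_1,\dots,a_kb_kc_k$ ($k\ge2$) of distinct missing paths of length 2 (components of the missing graph, edges $a_ib_i,b_ic_i$) with $a_ib_ic_i\to a_{i+1}b_{i+1}c_{i+1}$ for all $i$, indices modulo $k$. $K(C)=\{a_i,b_i,c_i:1\le i\le k\}$. *)

theory Defs
  imports Main
begin

definition oriented_graph :: "'a set \<Rightarrow> ('a \<times> 'a) set \<Rightarrow> bool" where
  "oriented_graph V E \<longleftrightarrow> finite V \<and> E \<subseteq> V \<times> V \<and>
     (\<forall>v. (v, v) \<notin> E) \<and> (\<forall>u w. (u, w) \<in> E \<longrightarrow> (w, u) \<notin> E)"

text \<open>Neighbourhoods in the induced subdigraph D[X] (D = (V,E), X \<subseteq> V).\<close>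

definition out_nbr :: "'a set \<Rightarrow> ('a \<times> 'a) set \<Rightarrow> 'a \<Rightarrow> 'a set" where
  "out_nbr X E v = {w \<in> X. (v, w) \<in> E}"

definition in_nbr :: "'a set \<Rightarrow> ('a \<times> 'a) set \<Rightarrow> 'a \<Rightarrow> 'a set" where
  "in_nbr X E v = {w \<in> X. (w, v) \<in> E}"

definition second_out_nbr :: "'a set \<Rightarrow> ('a \<times> 'a) set \<Rightarrow> 'a \<Rightarrow> 'a set" where
  "second_out_nbr X E v =
     {w \<in> X. w \<notin> out_nbr X E v \<and> w \<noteq> v \<and> (\<exists>u \<in> out_nbr X E v. (u, w) \<in> E)}"

definition missing :: "'a set \<Rightarrow> ('a \<times> 'a) set \<Rightarrow> 'a \<Rightarrow> 'a \<Rightarrow> bool" where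
  "missing V E x y \<longleftrightarrow> x \<in> V \<and> y \<in> V \<and> x \<noteq> y \<and> (x, y) \<notin> E \<and> (y, x) \<notin> E"

text \<open>a b c is a component of the missing graph which is a path with edges ab, bc.\<close>

definition missing_path :: "'a set \<Rightarrow> ('a \<times> 'a) set \<Rightarrow> 'a \<Rightarrow> 'a \<Rightarrow> 'a \<Rightarrow> bool" where
  "missing_path V E a b c \<longleftrightarrow>
     a \<noteq> c \<and> missing V E a b \<and> missing V E b c \<and> \<not> missing V E a c \<and>
     (\<forall>w. missing V E a w \<longrightarrow> w = b) \<and>
     (\<forall>w. missing V E c w \<longrightarrow> w = b) \<and>
     (\<forall>w. missing V E b w \<longrightarrow> w = a \<or> w = c)"

text \<open>Tournament missing disjoint paths of length 2: oriented graph whose missing graph is a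
  vertex-disjoint union of paths with exactly two edges, i.e. every missing edge lies in such a
  component.\<close>

definition tournament_missing_P2 :: "'a set \<Rightarrow> ('a \<times> 'a) set \<Rightarrow> bool" where
  "tournament_missing_P2 V E \<longleftrightarrow> oriented_graph V E \<and>
     (\<forall>x y. missing V E x y \<longrightarrow>
        (\<exists>a b c. missing_path V E a b c \<and> ({x, y} = {a, b} \<or> {x, y} = {b, c})))"

definition loses :: "'a set \<Rightarrow> ('a \<times> 'a) set \<Rightarrow> 'a set \<Rightarrow> 'a set \<Rightarrow> bool" where
  "loses V E e f \<longleftrightarrow> (\<exists>x y a b. e = {x, y} \<and> f = {a, b} \<and>
       (x, a) \<in> E \<and> b \<notin> out_nbr V E x \<union> second_out_nbr V E x \<and>
       (y, b) \<in> E \<and> a \<notin> out_nbr V E y \<union> second_out_nbr V E y)"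

definition path_loses :: "'a set \<Rightarrow> ('a \<times> 'a) set \<Rightarrow> 'a \<Rightarrow> 'a \<Rightarrow> 'a \<Rightarrow> 'a \<Rightarrow> 'a \<Rightarrow> 'a \<Rightarrow> bool" where
  "path_loses V E a b c x y z \<longleftrightarrow>
     loses V E {a, b} {x, y} \<and> loses V E {a, b} {y, z} \<and>
     loses V E {b, c} {x, y} \<and> loses V E {b, c} {y, z}"

text \<open>Double cycle a_i b_i c_i, indexed by i = 0..k-1 (indices modulo k).\<close>

definition double_cycle :: "'a set \<Rightarrow> ('a \<times> 'a) set \<Rightarrow> nat \<Rightarrow>
    (nat \<Rightarrow> 'a) \<Rightarrow> (nat \<Rightarrow> 'a) \<Rightarrow> (nat \<Rightarrow> 'a) \<Rightarrow> bool" where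
  "double_cycle V E k a b c \<longleftrightarrow> k \<ge> 2 \<and>
     (\<forall>i < k. missing_path V E (a i) (b i) (c i)) \<and>
     (\<forall>i < k. \<forall>j < k. i \<noteq> j \<longrightarrow> {a i, b i, c i} \<noteq> {a j, b j, c j}) \<and>
     (\<forall>i < k. path_loses V E (a i) (b i) (c i)
                 (a (Suc i mod k)) (b (Suc i mod k)) (c (Suc i mod k)))"

definition K_set :: "nat \<Rightarrow> (nat \<Rightarrow> 'a) \<Rightarrow> (nat \<Rightarrow> 'a) \<Rightarrow> (nat \<Rightarrow> 'a) \<Rightarrow> 'a set" where
  "K_set k a b c = (\<Union>i < k. {a i, b i, c i})"

end

theory Submission
  imports Defs
begin


definition tf :: "('a \<times> 'a) set \<Rightarrow> 'a \<Rightarrow> 'a \<Rightarrow> bool" where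
  "tf E p q \<longleftrightarrow> (p, q) \<in> E \<and> (\<forall>u. (q, u) \<in> E \<longrightarrow> (u, p) \<notin> E)"

lemma tfD1: "tf E p q \<Longrightarrow> (p, q) \<in> E" by (simp add: tf_def)
lemma tfD2: "tf E p q \<Longrightarrow> (q, u) \<in> E \<Longrightarrow> (u, p) \<in> E \<Longrightarrow> False" by (auto simp add: tf_def)

definition AA where
  "AA E a b c x y z \<longleftrightarrow> (a,x)\<in>E \<and> (a,z)\<in>E \<and> (c,x)\<in>E \<and> (c,z)\<in>E \<and> (b,y)\<in>E \<and>
     tf E y a \<and> tf E y c \<and> tf E x b \<and> tf E z b"
definition BB where
  "BB E a b c x y z \<longleftrightarrow> (b,x)\<in>E \<and> (b,z)\<in>E \<and> (a,y)\<in>E \<and> (c,y)\<in>E \<and>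
     tf E x a \<and> tf E x c \<and> tf E z a \<and> tf E z c \<and> tf E y b"

lemma modd: "(j::nat)<k \<Longrightarrow> t<k \<Longrightarrow> j\<noteq>t \<Longrightarrow> \<exists>d. 1 \<le> d \<and> d < k \<and> (j+d) mod k = t"
proof (cases "j < t")
  case True
  assume "j<k" "t<k" "j\<noteq>t"
  then show ?thesis using True by (intro exI[of _ "t-j"]) auto
next
  case False
  assume h: "j<k" "t<k" "j\<noteq>t"
  then have "j + (t+k-j) = t + k" by simp
  then have "(j + (t+k-j)) mod k = t" using h by simp
  then show ?thesis using False h by (intro exI[of _ "t+k-j"]) auto
qed

lemma modne: "(j::nat)<k \<Longrightarrow> 1 \<le> d \<Longrightarrow> d < k \<Longrightarrow> (j+d) mod k \<noteq> j"
proof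
  assume h: "j<k" "1 \<le> d" "d < k" "(j+d) mod k = j"
  show False
  proof (cases "j+d<k")
    case True then have "(j+d) mod k = j+d" by simp
    then show False using h by simp
  next
    case False
    then have "(j+d) mod k = (j+d-k) mod k" using le_mod_geq[of k "j+d"] by simp
    also have "\<dots> = j+d-k" using h by simp
    finally have "(j+d) mod k = j+d-k" .
    then show False using h False by simp
  qed
qed

locale DC =
  fixes E :: "('a \<times> 'a) set" and k :: nat and a b c :: "nat \<Rightarrow> 'a"
  assumes anti: "(x,y)\<in>E \<Longrightarrow> (y,x)\<in>E \<Longrightarrow> False"
  and k2: "2 \<le> k"
  and adj: "i<k \<Longrightarrow> j<k \<Longrightarrow> i\<noteq>j \<Longrightarrow> x \<in> {a i, b i, c i} \<Longrightarrow> y \<in> {a j, b j, c j} \<Longrightarrow> (x,y)\<in>E \<or> (y,x)\<in>E"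
  and disj: "i<k \<Longrightarrow> j<k \<Longrightarrow> x \<in> {a i, b i, c i} \<Longrightarrow> x \<in> {a j, b j, c j} \<Longrightarrow> i = j"
  and inner: "i<k \<Longrightarrow> a i \<noteq> b i \<and> b i \<noteq> c i \<and> a i \<noteq> c i \<and> (a i, b i)\<notin>E \<and> (b i, a i)\<notin>E \<and>
      (b i, c i)\<notin>E \<and> (c i, b i)\<notin>E \<and> ((a i, c i)\<in>E \<or> (c i, a i)\<in>E)"
  and step: "t<k \<Longrightarrow> AA E (a t) (b t) (c t) (a (Suc t mod k)) (b (Suc t mod k)) (c (Suc t mod k)) \<or>
                     BB E (a t) (b t) (c t) (a (Suc t mod k)) (b (Suc t mod k)) (c (Suc t mod k))"
begin

lemma backw:
  assumes "1 \<le> d" "d < k" "j < k" "w \<in> {a j, b j, c j}"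
    "(w, b ((j+d) mod k)) \<in> E" "(w, a ((j+d) mod k)) \<in> E \<or> (w, c ((j+d) mod k)) \<in> E"
  shows False
  using assms
proof (induction d)
  case 0 thus ?case by simp
next
  case (Suc d)
  show ?case
  proof (cases "d = 0")
    case True
    then have m: "(j + Suc d) mod k = Suc j mod k" by simp
    from step[OF \<open>j<k\<close>] show False using Suc.prems m
      unfolding AA_def BB_def by (auto dest!: tfD1 intro: anti)
  next
    case False
    define i where "i = (j+d) mod k"
    have i: "i<k" using k2 i_def by simp
    have m: "(j + Suc d) mod k = Suc i mod k" by (simp add: i_def mod_Suc_eq)
    have "i \<noteq> j" using modne[of j k d] Suc.prems False i_def by simp
    have ad: "\<And>y. y \<in> {a i,b i,c i} \<Longrightarrow> (w,y)\<in>E \<or> (y,w)\<in>E"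
      by (rule adj[OF \<open>j<k\<close> i]) (use \<open>i\<noteq>j\<close> Suc.prems(4) in auto)
    have p5: "(w, b (Suc i mod k))\<in>E" using Suc.prems(5) m by simp
    have p6: "(w, a (Suc i mod k))\<in>E \<or> (w, c (Suc i mod k))\<in>E" using Suc.prems(6) m by simp
    have adb: "(w, b i)\<in>E \<or> (b i, w)\<in>E" and ada: "(w, a i)\<in>E \<or> (a i, w)\<in>E" using ad by auto
    have wb: "(w, b i)\<in>E \<and> (w, a i)\<in>E"
      using step[OF i]
    proof
      assume "AA E (a i) (b i) (c i) (a (Suc i mod k)) (b (Suc i mod k)) (c (Suc i mod k))"
      then have t1: "tf E (a (Suc i mod k)) (b i)" and t2: "tf E (c (Suc i mod k)) (b i)"
        and t3: "tf E (b (Suc i mod k)) (a i)" unfolding AA_def by auto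
      show ?thesis using adb ada p5 p6 tfD2[OF t1, of w] tfD2[OF t2, of w] tfD2[OF t3, of w] by blast
    next
      assume "BB E (a i) (b i) (c i) (a (Suc i mod k)) (b (Suc i mod k)) (c (Suc i mod k))"
      then have t1: "tf E (a (Suc i mod k)) (a i)" and t2: "tf E (c (Suc i mod k)) (a i)"
        and t3: "tf E (b (Suc i mod k)) (b i)" unfolding BB_def by auto
      show ?thesis using adb ada p5 p6 tfD2[OF t1, of w] tfD2[OF t2, of w] tfD2[OF t3, of w] by blast
    qed
    have d1: "1 \<le> d" using False by simp
    have d2: "d < k" using Suc.prems by simp
    show False
      by (rule Suc.IH[OF d1 d2 \<open>j<k\<close> \<open>w \<in> _\<close>]) (use wb i_def in auto)
  qed
qed

lemma forw:
  assumes "1 \<le> d" "d < k" "m < k" "w \<in> {a ((m+d) mod k), b ((m+d) mod k), c ((m+d) mod k)}"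
    "(b m, w) \<in> E" "(a m, w) \<in> E \<or> (c m, w) \<in> E"
  shows False
  using assms
proof (induction d arbitrary: m)
  case 0 thus ?case by simp
next
  case (Suc d)
  show ?case
  proof (cases "d = 0")
    case True
    then have m: "(m + Suc d) mod k = Suc m mod k" by simp
    from step[OF \<open>m<k\<close>] show False using Suc.prems m
      unfolding AA_def BB_def by (auto dest!: tfD1 intro: anti)
  next
    case False
    define s where "s = Suc m mod k"
    have s: "s<k" using k2 s_def by simp
    have m: "(m + Suc d) mod k = (s + d) mod k" by (simp add: s_def mod_Suc_eq mod_add_left_eq)
    have j: "(m + Suc d) mod k < k" using k2 by simp
    have "s \<noteq> (m + Suc d) mod k" using modne[of s k d] False Suc.prems s m by simp
    have ad: "\<And>y. y \<in> {a s,b s,c s} \<Longrightarrow> (w,y)\<in>E \<or> (y,w)\<in>E"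
      by (rule adj[OF j s]) (use \<open>s \<noteq> (m + Suc d) mod k\<close> Suc.prems(4) in auto)
    have adb: "(w, b s)\<in>E \<or> (b s, w)\<in>E" and ada: "(w, a s)\<in>E \<or> (a s, w)\<in>E" using ad by auto
    have p5: "(b m, w)\<in>E" and p6: "(a m, w)\<in>E \<or> (c m, w)\<in>E" using Suc.prems by auto
    have wb: "(b s, w)\<in>E \<and> (a s, w)\<in>E"
      using step[OF \<open>m<k\<close>]
    proof
      assume "AA E (a m) (b m) (c m) (a (Suc m mod k)) (b (Suc m mod k)) (c (Suc m mod k))"
      then have t1: "tf E (b s) (a m)" and t2: "tf E (b s) (c m)"
        and t3: "tf E (a s) (b m)" unfolding AA_def s_def by auto
      show ?thesis using adb ada p5 p6 tfD2[OF t1, of w] tfD2[OF t2, of w] tfD2[OF t3, of w] by blast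
    next
      assume "BB E (a m) (b m) (c m) (a (Suc m mod k)) (b (Suc m mod k)) (c (Suc m mod k))"
      then have t1: "tf E (a s) (a m)" and t2: "tf E (a s) (c m)"
        and t3: "tf E (b s) (b m)" unfolding BB_def s_def by auto
      show ?thesis using adb ada p5 p6 tfD2[OF t1, of w] tfD2[OF t2, of w] tfD2[OF t3, of w] by blast
    qed
    have d1: "1 \<le> d" using False by simp
    have d2: "d < k" using Suc.prems by simp
    have wi: "w \<in> {a ((s+d) mod k), b ((s+d) mod k), c ((s+d) mod k)}" using Suc.prems(4) m by simp
    show False
      by (rule Suc.IH[OF d1 d2 s wi]) (use wb in auto)
  qed
qed

end



context DC begin

lemma inK: "i<k \<Longrightarrow> x \<in> {a i,b i,c i} \<Longrightarrow> x \<in> K_set k a b c" by (auto simp: K_set_def)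
lemma Kin: "x \<in> K_set k a b c \<Longrightarrow> \<exists>j<k. x \<in> {a j,b j,c j}" by (auto simp: K_set_def)

lemma back2: "j<k \<Longrightarrow> t<k \<Longrightarrow> j\<noteq>t \<Longrightarrow> w \<in> {a j,b j,c j} \<Longrightarrow> (w,b t)\<in>E \<Longrightarrow>
   (w,a t)\<in>E \<or> (w,c t)\<in>E \<Longrightarrow> False"
  using modd[of j k t] backw by metis

lemma forw2: "t<k \<Longrightarrow> j<k \<Longrightarrow> j\<noteq>t \<Longrightarrow> w \<in> {a j,b j,c j} \<Longrightarrow> (b t,w)\<in>E \<Longrightarrow>
   (a t,w)\<in>E \<or> (c t,w)\<in>E \<Longrightarrow> False"
  using modd[of t k j] forw by metis

lemma sfacts: assumes "t < k" shows "Suc t mod k < k \<and> Suc t mod k \<noteq> t"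
proof (cases "Suc t < k")
  case True then show ?thesis by simp
next
  case False then have "Suc t = k" using assms by simp
  then show ?thesis using k2 by auto
qed

lemma S1: assumes t: "t<k" and y: "y \<in> {a (Suc t mod k), b (Suc t mod k), c (Suc t mod k)}"
  and x: "x \<in> {a t, b t, c t}" and yx: "(y,x)\<in>E" shows "tf E y x"
  using step[OF t]
proof
  assume "AA E (a t) (b t) (c t) (a (Suc t mod k)) (b (Suc t mod k)) (c (Suc t mod k))"
  then show ?thesis using x y yx inner[OF t] unfolding AA_def by (auto dest: anti)
next
  assume "BB E (a t) (b t) (c t) (a (Suc t mod k)) (b (Suc t mod k)) (c (Suc t mod k))"
  then show ?thesis using x y yx inner[OF t] unfolding BB_def by (auto dest: anti)
qed

lemma W_ac: "t<k \<Longrightarrow> v \<in> {a t, c t} \<Longrightarrow>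
   \<exists>u\<in>{a (Suc t mod k), b (Suc t mod k), c (Suc t mod k)}. (v,u)\<in>E \<and> tf E u (b t)"
  using step[of t] unfolding AA_def BB_def by auto

lemma W_b: "t<k \<Longrightarrow>
   \<exists>u\<in>{a (Suc t mod k), b (Suc t mod k), c (Suc t mod k)}. (b t,u)\<in>E \<and> tf E u (a t)"
  using step[of t] unfolding AA_def BB_def by auto

lemma W_bc: "t<k \<Longrightarrow>
   \<exists>u\<in>{a (Suc t mod k), b (Suc t mod k), c (Suc t mod k)}. (b t,u)\<in>E \<and> (u, c t) \<in> E"
  using step[of t] unfolding AA_def BB_def by (auto dest: tfD1)


lemma ac_claim:
  assumes t: "t<k" and v: "(v = a t \<and> q = c t) \<or> (v = c t \<and> q = a t)"
  shows "second_out_nbr (K_set k a b c) E v =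
           (in_nbr (K_set k a b c) E v \<union> {b t}) -
             {a (Suc t mod k), b (Suc t mod k), c (Suc t mod k), q}"
proof -
  have s: "Suc t mod k < k" and sne: "Suc t mod k \<noteq> t" using sfacts[OF t] by auto
  have inn: "a t \<noteq> b t \<and> b t \<noteq> c t \<and> a t \<noteq> c t \<and> (a t, b t)\<notin>E \<and> (b t, a t)\<notin>E \<and>
      (b t, c t)\<notin>E \<and> (c t, b t)\<notin>E \<and> ((a t, c t)\<in>E \<or> (c t, a t)\<in>E)" using inner[OF t] .
  have vT: "v \<in> {a t, b t, c t}" and oT: "q \<in> {a t, b t, c t}" using v by auto
  have vo: "v \<noteq> q" "(v,q)\<in>E \<or> (q,v)\<in>E" "v \<noteq> b t" "q \<noteq> b t" "(v, b t)\<notin>E" "(b t, v)\<notin>E"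
    "(q, b t)\<notin>E" "(b t, q)\<notin>E"
    using v inn by auto
  have vac: "v \<in> {a t, c t}" and oac: "(w,q)\<in>E \<Longrightarrow> (w,a t)\<in>E \<or> (w,c t)\<in>E" for w using v by auto
  obtain u1 where u1: "u1 \<in> {a (Suc t mod k), b (Suc t mod k), c (Suc t mod k)}" "(v,u1)\<in>E" "tf E u1 (b t)"
    using W_ac[OF t vac] by blast
  have u1K: "u1 \<in> K_set k a b c" using inK[OF s u1(1)] .
  have oclaim: "q \<notin> second_out_nbr (K_set k a b c) E v"
  proof
    assume "q \<in> second_out_nbr (K_set k a b c) E v"
    then obtain u where uK: "u \<in> K_set k a b c" and vu: "(v,u)\<in>E" and uo: "(u,q)\<in>E" and nvo: "(v,q)\<notin>E"
      unfolding second_out_nbr_def out_nbr_def by auto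
    have ov: "(q,v)\<in>E" using vo nvo by auto
    obtain j where j: "j<k" "u \<in> {a j, b j, c j}" using Kin[OF uK] by auto
    have jt: "j \<noteq> t"
    proof
      assume "j = t"
      then have "u = v \<or> u = b t \<or> u = q" using j v by auto
      then show False using vu vo nvo anti[of v v] by blast
    qed
    have js: "j \<noteq> Suc t mod k"
    proof
      assume "j = Suc t mod k"
      then have "tf E u q" using S1[OF t _ oT uo] j by simp
      then show False using tfD2[OF _ ov vu] by blast
    qed
    have "(u, b t)\<in>E \<or> (b t, u)\<in>E" using adj[OF j(1) t jt j(2)] by simp
    then show False
    proof
      assume "(u, b t)\<in>E"
      then show False using back2[OF j(1) t jt j(2)] oac[OF uo] by blast
    next
      assume "(b t, u)\<in>E"
      then show False using forw2[OF t j(1) jt j(2)] vu vac by blast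
    qed
  qed
  show ?thesis
  proof (intro equalityI subsetI)
    fix w assume w: "w \<in> second_out_nbr (K_set k a b c) E v"
    then obtain u where wK: "w \<in> K_set k a b c" and wv: "w \<noteq> v" and nvw: "(v,w)\<notin>E"
      and vu: "(v,u)\<in>E" and uw: "(u,w)\<in>E"
      unfolding second_out_nbr_def out_nbr_def by auto
    obtain j where j: "j<k" "w \<in> {a j, b j, c j}" using Kin[OF wK] by auto
    have wo: "w \<noteq> q" using w oclaim by blast
    have A: "w = b t \<or> (w,v)\<in>E"
    proof (cases "j = t")
      case True
      then have "w = b t \<or> w = q" using j v wv by auto
      then show ?thesis using wo by blast
    next
      case False
      then show ?thesis using adj[OF j(1) t False j(2) vT] nvw by blast
    qed
    have B: "w \<notin> {a (Suc t mod k), b (Suc t mod k), c (Suc t mod k)}"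
    proof
      assume ws: "w \<in> {a (Suc t mod k), b (Suc t mod k), c (Suc t mod k)}"
      have "w \<noteq> b t" using disj[OF s t ws] sne by auto
      then have "(w,v)\<in>E" using A by blast
      then have "tf E w v" using S1[OF t ws vT] by simp
      then show False using tfD2[OF _ vu uw] by blast
    qed
    show "w \<in> (in_nbr (K_set k a b c) E v \<union> {b t}) - {a (Suc t mod k), b (Suc t mod k), c (Suc t mod k), q}"
      using A B wo wK unfolding in_nbr_def by auto
  next
    fix w assume w: "w \<in> (in_nbr (K_set k a b c) E v \<union> {b t}) - {a (Suc t mod k), b (Suc t mod k), c (Suc t mod k), q}"
    then have wo: "w \<noteq> q" and B: "w \<notin> {a (Suc t mod k), b (Suc t mod k), c (Suc t mod k)}" by auto
    show "w \<in> second_out_nbr (K_set k a b c) E v"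
    proof (cases "w = b t")
      case True
      have "b t \<in> K_set k a b c" using inK[OF t] by simp
      then show ?thesis using True vo u1 u1K tfD1[OF u1(3)]
        unfolding second_out_nbr_def out_nbr_def by auto
    next
      case False
      then have wK: "w \<in> K_set k a b c" and wv: "(w,v)\<in>E" using w unfolding in_nbr_def by auto
      have nvw: "(v,w)\<notin>E" "w \<noteq> v" using wv anti[of w v] anti[of v v] by blast+
      have "\<exists>u\<in>out_nbr (K_set k a b c) E v. (u,w)\<in>E"
      proof (rule ccontr)
        assume no: "\<not> (\<exists>u\<in>out_nbr (K_set k a b c) E v. (u,w)\<in>E)"
        have nu1: "(u1,w)\<notin>E" using no u1 u1K unfolding out_nbr_def by auto
        obtain j where j: "j<k" "w \<in> {a j, b j, c j}" using Kin[OF wK] by auto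
        have js: "j \<noteq> Suc t mod k" using B j by auto
        have jt: "j \<noteq> t"
        proof
          assume "j = t"
          then have "w = v \<or> w = b t \<or> w = q" using j v by auto
          then show False using nvw False wo by blast
        qed
        have wu1: "(w,u1)\<in>E" using adj[OF j(1) s js j(2) u1(1)] nu1 by blast
        have "(w, b t)\<in>E \<or> (b t, w)\<in>E" using adj[OF j(1) t jt j(2)] by simp
        then have wb: "(w, b t)\<in>E" using tfD2[OF u1(3), of w] wu1 by blast
        show False using back2[OF j(1) t jt j(2) wb] wv vac by blast
      qed
      then show ?thesis using wK nvw unfolding second_out_nbr_def out_nbr_def by auto
    qed
  qed
qed

end



context DC begin
lemma b_claim:
  assumes t: "t<k"
  shows "second_out_nbr (K_set k a b c) E (b t) =
           (in_nbr (K_set k a b c) E (b t) \<union> {a t, c t}) -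
             {a (Suc t mod k), b (Suc t mod k), c (Suc t mod k)}"
proof -
  have s: "Suc t mod k < k" and sne: "Suc t mod k \<noteq> t" using sfacts[OF t] by auto
  have inn: "a t \<noteq> b t \<and> b t \<noteq> c t \<and> a t \<noteq> c t \<and> (a t, b t)\<notin>E \<and> (b t, a t)\<notin>E \<and>
      (b t, c t)\<notin>E \<and> (c t, b t)\<notin>E \<and> ((a t, c t)\<in>E \<or> (c t, a t)\<in>E)" using inner[OF t] .
  have bT: "b t \<in> {a t, b t, c t}" by simp
  obtain u1 where u1: "u1 \<in> {a (Suc t mod k), b (Suc t mod k), c (Suc t mod k)}" "(b t,u1)\<in>E" "tf E u1 (a t)"
    using W_b[OF t] by blast
  obtain u2 where u2: "u2 \<in> {a (Suc t mod k), b (Suc t mod k), c (Suc t mod k)}" "(b t,u2)\<in>E" "(u2, c t)\<in>E"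
    using W_bc[OF t] by blast
  have u1K: "u1 \<in> K_set k a b c" using inK[OF s u1(1)] .
  have u2K: "u2 \<in> K_set k a b c" using inK[OF s u2(1)] .
  have atK: "a t \<in> K_set k a b c" and ctK: "c t \<in> K_set k a b c" using inK[OF t] by auto
  have nS: "x \<in> {a t, b t, c t} \<Longrightarrow> x \<notin> {a (Suc t mod k), b (Suc t mod k), c (Suc t mod k)}" for x
    using disj[OF s t] sne by blast
  show ?thesis
  proof (intro equalityI subsetI)
    fix w assume w: "w \<in> second_out_nbr (K_set k a b c) E (b t)"
    then obtain u where wK: "w \<in> K_set k a b c" and wv: "w \<noteq> b t" and nvw: "(b t,w)\<notin>E"
      and vu: "(b t,u)\<in>E" and uw: "(u,w)\<in>E"
      unfolding second_out_nbr_def out_nbr_def by auto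
    obtain j where j: "j<k" "w \<in> {a j, b j, c j}" using Kin[OF wK] by auto
    show "w \<in> (in_nbr (K_set k a b c) E (b t) \<union> {a t, c t}) - {a (Suc t mod k), b (Suc t mod k), c (Suc t mod k)}"
    proof (cases "j = t")
      case True
      then have "w \<in> {a t, c t}" using j wv by auto
      then show ?thesis using nS[of w] by auto
    next
      case False
      then have A: "(w, b t)\<in>E" using adj[OF j(1) t False j(2) bT] nvw by blast
      have B: "w \<notin> {a (Suc t mod k), b (Suc t mod k), c (Suc t mod k)}"
      proof
        assume ws: "w \<in> {a (Suc t mod k), b (Suc t mod k), c (Suc t mod k)}"
        then have "tf E w (b t)" using S1[OF t ws bT] A by simp
        then show False using tfD2[OF _ vu uw] by blast
      qed
      show ?thesis using A B wK unfolding in_nbr_def by auto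
    qed
  next
    fix w assume w: "w \<in> (in_nbr (K_set k a b c) E (b t) \<union> {a t, c t}) - {a (Suc t mod k), b (Suc t mod k), c (Suc t mod k)}"
    then have B: "w \<notin> {a (Suc t mod k), b (Suc t mod k), c (Suc t mod k)}" by auto
    show "w \<in> second_out_nbr (K_set k a b c) E (b t)"
    proof (cases "w = a t")
      case True
      then show ?thesis using inn u1 u1K atK tfD1[OF u1(3)]
        unfolding second_out_nbr_def out_nbr_def by auto
    next
      case nota: False
      show ?thesis
      proof (cases "w = c t")
        case True
        then show ?thesis using inn u2 u2K ctK
          unfolding second_out_nbr_def out_nbr_def by auto
      next
        case False
        then have wK: "w \<in> K_set k a b c" and wv: "(w,b t)\<in>E" using w nota unfolding in_nbr_def by auto
        have nvw: "(b t,w)\<notin>E" "w \<noteq> b t" using wv anti[of w "b t"] anti[of "b t" "b t"] by blast+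
        have "\<exists>u\<in>out_nbr (K_set k a b c) E (b t). (u,w)\<in>E"
        proof (rule ccontr)
          assume no: "\<not> (\<exists>u\<in>out_nbr (K_set k a b c) E (b t). (u,w)\<in>E)"
          have nu1: "(u1,w)\<notin>E" using no u1 u1K unfolding out_nbr_def by auto
          obtain j where j: "j<k" "w \<in> {a j, b j, c j}" using Kin[OF wK] by auto
          have js: "j \<noteq> Suc t mod k" using B j by auto
          have jt: "j \<noteq> t"
          proof
            assume "j = t"
            then have "w = a t \<or> w = b t \<or> w = c t" using j by auto
            then show False using nvw False nota by blast
          qed
          have wu1: "(w,u1)\<in>E" using adj[OF j(1) s js j(2) u1(1)] nu1 by blast
          have "(w, a t)\<in>E \<or> (a t, w)\<in>E" using adj[OF j(1) t jt j(2)] by simp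
          then have wa: "(w, a t)\<in>E" using tfD2[OF u1(3), of w] wu1 by blast
          show False using back2[OF j(1) t jt j(2) wv] wa by blast
        qed
        then show ?thesis using wK nvw unfolding second_out_nbr_def out_nbr_def by auto
      qed
    qed
  qed
qed
end

lemma missing_sym: "missing V E x y = missing V E y x" unfolding missing_def by auto

lemma mp_closure: "missing_path V E a b c \<Longrightarrow> x \<in> {a,b,c} \<Longrightarrow> missing V E x y \<Longrightarrow> y \<in> {a,b,c}"
  unfolding missing_path_def by auto

lemma mp_overlap:
  assumes m1: "missing_path V E a b c" and m2: "missing_path V E a' b' c'"
    and x: "x \<in> {a,b,c}" "x \<in> {a',b',c'}"
  shows "{a,b,c} = {a',b',c'}"
proof -
  have M1: "missing V E a b" "missing V E b c" "missing V E b a" "missing V E c b"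
    using m1 missing_sym unfolding missing_path_def by metis+
  have M2: "missing V E a' b'" "missing V E b' c'" "missing V E b' a'" "missing V E c' b'"
    using m2 missing_sym unfolding missing_path_def by metis+
  have C1: "\<And>z y. z \<in> {a,b,c} \<Longrightarrow> missing V E z y \<Longrightarrow> y \<in> {a,b,c}" using mp_closure[OF m1] by blast
  have C2: "\<And>z y. z \<in> {a',b',c'} \<Longrightarrow> missing V E z y \<Longrightarrow> y \<in> {a',b',c'}" using mp_closure[OF m2] by blast
  have ac1: "a \<noteq> c" and ac2: "a' \<noteq> c'" using m1 m2 unfolding missing_path_def by auto
  have S1: "{a,b,c} \<subseteq> {a',b',c'}"
  proof -
    have "b \<in> {a',b',c'}" using x C2 M1 by auto
    then show ?thesis using C2 M1 by auto
  qed
  have S2: "{a',b',c'} \<subseteq> {a,b,c}"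
  proof -
    have "b' \<in> {a,b,c}" using x C1 M2 by auto
    then show ?thesis using C1 M2 by auto
  qed
  show ?thesis using S1 S2 by blast
qed




lemma tf_from:
  assumes EV: "E \<subseteq> V \<times> V" and nb: "b' \<notin> out_nbr V E x \<union> second_out_nbr V E x"
    and bV: "b' \<in> V" and bx: "b' \<noteq> x" and ad: "(x,b')\<in>E \<or> (b',x)\<in>E"
  shows "tf E b' x"
proof -
  have n1: "(x,b')\<notin>E" using nb bV unfolding out_nbr_def by auto
  have n2: "(u,b')\<notin>E" if xu: "(x,u)\<in>E" for u
  proof
    assume ub: "(u,b')\<in>E"
    have "u \<in> V" using EV xu by auto
    then have "u \<in> out_nbr V E x" using xu unfolding out_nbr_def by auto
    then have "b' \<in> second_out_nbr V E x" using ub bV n1 bx unfolding second_out_nbr_def out_nbr_def by auto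
    then show False using nb by auto
  qed
  show ?thesis unfolding tf_def using n1 n2 ad by auto
qed

lemma loses_cases:
  assumes EV: "E \<subseteq> V \<times> V" and L: "loses V E {p,q} {r,s}"
    and adjs: "\<forall>x\<in>{p,q}. \<forall>y\<in>{r,s}. x \<noteq> y \<and> ((x,y)\<in>E \<or> (y,x)\<in>E)"
  shows "((p,r)\<in>E \<and> (q,s)\<in>E \<and> tf E s p \<and> tf E r q) \<or> ((p,s)\<in>E \<and> (q,r)\<in>E \<and> tf E r p \<and> tf E s q)"
proof -
  obtain x y a' b' where e: "{p,q} = {x,y}" "{r,s} = {a',b'}" "(x,a')\<in>E"
    "b' \<notin> out_nbr V E x \<union> second_out_nbr V E x" "(y,b')\<in>E" "a' \<notin> out_nbr V E y \<union> second_out_nbr V E y"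
    using L unfolding loses_def by blast
  have xs: "x \<in> {p,q}" "y \<in> {p,q}" and as: "a' \<in> {r,s}" "b' \<in> {r,s}" using e(1,2) by auto
  have bV: "b' \<in> V" and aV: "a' \<in> V" using EV e(3,5) by auto
  have t1: "tf E b' x" using tf_from[OF EV e(4) bV] adjs xs as by blast
  have t2: "tf E a' y" using tf_from[OF EV e(6) aV] adjs xs as by blast
  have c1: "(x = p \<and> y = q) \<or> (x = q \<and> y = p)" using e(1) by (auto simp: doubleton_eq_iff)
  have c2: "(a' = r \<and> b' = s) \<or> (a' = s \<and> b' = r)" using e(2) by (auto simp: doubleton_eq_iff)
  show ?thesis using c1 c2 t1 t2 e(3,5) by auto
qed

lemma pl_cases:
  assumes EV: "E \<subseteq> V \<times> V" and anti: "\<And>u v. (u,v)\<in>E \<Longrightarrow> (v,u)\<in>E \<Longrightarrow> False"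
    and P: "path_loses V E a b c x y z"
    and adjs: "\<forall>u\<in>{a,b,c}. \<forall>v\<in>{x,y,z}. u \<noteq> v \<and> ((u,v)\<in>E \<or> (v,u)\<in>E)"
  shows "AA E a b c x y z \<or> BB E a b c x y z"
proof -
  have L1: "((a,x)\<in>E \<and> (b,y)\<in>E \<and> tf E y a \<and> tf E x b) \<or> ((a,y)\<in>E \<and> (b,x)\<in>E \<and> tf E x a \<and> tf E y b)"
    by (rule loses_cases[OF EV]) (use P adjs in \<open>auto simp: path_loses_def\<close>)
  have L2: "((a,y)\<in>E \<and> (b,z)\<in>E \<and> tf E z a \<and> tf E y b) \<or> ((a,z)\<in>E \<and> (b,y)\<in>E \<and> tf E y a \<and> tf E z b)"
    by (rule loses_cases[OF EV]) (use P adjs in \<open>auto simp: path_loses_def\<close>)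
  have L3: "((b,x)\<in>E \<and> (c,y)\<in>E \<and> tf E y b \<and> tf E x c) \<or> ((b,y)\<in>E \<and> (c,x)\<in>E \<and> tf E x b \<and> tf E y c)"
    by (rule loses_cases[OF EV]) (use P adjs in \<open>auto simp: path_loses_def\<close>)
  have L4: "((b,y)\<in>E \<and> (c,z)\<in>E \<and> tf E z b \<and> tf E y c) \<or> ((b,z)\<in>E \<and> (c,y)\<in>E \<and> tf E y b \<and> tf E z c)"
    by (rule loses_cases[OF EV]) (use P adjs in \<open>auto simp: path_loses_def\<close>)
  from L1 show ?thesis
  proof
    assume h1: "(a,x)\<in>E \<and> (b,y)\<in>E \<and> tf E y a \<and> tf E x b"
    have "(y,a)\<in>E" "(x,b)\<in>E" using h1 tfD1[of E y a] tfD1[of E x b] by auto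
    then have n1: "(a,y)\<notin>E" "(b,x)\<notin>E" using anti[of a y] anti[of b x] by auto
    have n1b: "(y,b)\<notin>E" using h1 anti[of y b] by auto
    have h2: "(a,z)\<in>E \<and> tf E y a \<and> tf E z b" using L2 n1 n1b tfD1[of E y b] by auto
    have h3: "(c,x)\<in>E \<and> tf E y c" using L3 n1 by auto
    have "(z,b)\<in>E" using h2 tfD1[of E z b] by auto
    then have n2: "(b,z)\<notin>E" using anti[of b z] by auto
    have h4: "(c,z)\<in>E" using L4 n2 by auto
    show ?thesis unfolding AA_def using h1 h2 h3 h4 by auto
  next
    assume h1: "(a,y)\<in>E \<and> (b,x)\<in>E \<and> tf E x a \<and> tf E y b"
    have "(x,a)\<in>E" "(y,b)\<in>E" using h1 tfD1[of E x a] tfD1[of E y b] by auto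
    then have n1: "(b,y)\<notin>E" "(a,x)\<notin>E" using anti[of b y] anti[of a x] by auto
    have n1b: "(y,a)\<notin>E" "(x,b)\<notin>E" using h1 anti[of y a] anti[of x b] by auto
    have h2: "(b,z)\<in>E \<and> tf E z a" using L2 n1 n1b tfD1[of E y a] by auto
    have h3: "(c,y)\<in>E \<and> tf E x c" using L3 n1 n1b tfD1[of E x b] by auto
    have h4: "tf E z c" using L4 n1 by auto
    show ?thesis unfolding BB_def using h1 h2 h3 h4 by auto
  qed
qed




theorem lemma4p10:
  fixes V :: "'a set" and E :: "('a \<times> 'a) set" and k :: nat
    and a b c :: "nat \<Rightarrow> 'a"
  assumes "tournament_missing_P2 V E"
    and "double_cycle V E k a b c"
    and "t < k"
  shows "second_out_nbr (K_set k a b c) E (a t) =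
           (in_nbr (K_set k a b c) E (a t) \<union> {b t}) -
             {a (Suc t mod k), b (Suc t mod k), c (Suc t mod k), c t} \<and>
         second_out_nbr (K_set k a b c) E (c t) =
           (in_nbr (K_set k a b c) E (c t) \<union> {b t}) -
             {a (Suc t mod k), b (Suc t mod k), c (Suc t mod k), a t} \<and>
         second_out_nbr (K_set k a b c) E (b t) =
           (in_nbr (K_set k a b c) E (b t) \<union> {a t, c t}) -
             {a (Suc t mod k), b (Suc t mod k), c (Suc t mod k)}"
proof -
  have og: "oriented_graph V E" using assms(1) unfolding tournament_missing_P2_def by auto
  have EV: "E \<subseteq> V \<times> V" using og unfolding oriented_graph_def by auto
  have anti: "\<And>x y. (x,y)\<in>E \<Longrightarrow> (y,x)\<in>E \<Longrightarrow> False" using og unfolding oriented_graph_def by auto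
  have k2: "2 \<le> k" using assms(2) unfolding double_cycle_def by auto
  have mp: "\<And>i. i<k \<Longrightarrow> missing_path V E (a i) (b i) (c i)" using assms(2) unfolding double_cycle_def by auto
  have dst: "\<And>i j. i<k \<Longrightarrow> j<k \<Longrightarrow> i \<noteq> j \<Longrightarrow> {a i, b i, c i} \<noteq> {a j, b j, c j}"
    using assms(2) unfolding double_cycle_def by auto
  have pl: "\<And>i. i<k \<Longrightarrow> path_loses V E (a i) (b i) (c i) (a (Suc i mod k)) (b (Suc i mod k)) (c (Suc i mod k))"
    using assms(2) unfolding double_cycle_def by auto
  have disj: "i = j" if "i<k" "j<k" "x \<in> {a i, b i, c i}" "x \<in> {a j, b j, c j}" for i j x
    using mp_overlap[OF mp[OF that(1)] mp[OF that(2)] that(3,4)] dst that(1,2) by blast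
  have inV: "{a i, b i, c i} \<subseteq> V" if "i<k" for i
    using mp[OF that] unfolding missing_path_def missing_def by auto
  have adj: "(x,y)\<in>E \<or> (y,x)\<in>E" if h: "i<k" "j<k" "i\<noteq>j" "x \<in> {a i, b i, c i}" "y \<in> {a j, b j, c j}" for i j x y
  proof (rule ccontr)
    assume na: "\<not> ((x,y)\<in>E \<or> (y,x)\<in>E)"
    have "x \<noteq> y" using disj[of i j] h by blast
    then have "missing V E x y" using na inV[OF h(1)] inV[OF h(2)] h unfolding missing_def by blast
    then have "y \<in> {a i, b i, c i}" using mp_closure[OF mp[OF h(1)] h(4)] by blast
    then show False using disj[OF h(1) h(2) _ h(5)] h(3) by blast
  qed
  have inner: "a i \<noteq> b i \<and> b i \<noteq> c i \<and> a i \<noteq> c i \<and> (a i, b i)\<notin>E \<and> (b i, a i)\<notin>E \<and>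
      (b i, c i)\<notin>E \<and> (c i, b i)\<notin>E \<and> ((a i, c i)\<in>E \<or> (c i, a i)\<in>E)" if "i<k" for i
    using mp[OF that] unfolding missing_path_def missing_def by auto
  have step: "AA E (a i) (b i) (c i) (a (Suc i mod k)) (b (Suc i mod k)) (c (Suc i mod k)) \<or>
       BB E (a i) (b i) (c i) (a (Suc i mod k)) (b (Suc i mod k)) (c (Suc i mod k))" if i: "i<k" for i
  proof -
    have s: "Suc i mod k < k" using k2 by simp
    have sne: "Suc i mod k \<noteq> i"
    proof (cases "Suc i < k")
      case True then show ?thesis by simp
    next
      case False then have "Suc i = k" using i by simp
      then show ?thesis using k2 by auto
    qed
    have ad: "\<forall>u\<in>{a i,b i,c i}. \<forall>v\<in>{a (Suc i mod k), b (Suc i mod k), c (Suc i mod k)}.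
        u \<noteq> v \<and> ((u,v)\<in>E \<or> (v,u)\<in>E)"
    proof (intro ballI conjI)
      fix u v assume u: "u\<in>{a i,b i,c i}" and v: "v\<in>{a (Suc i mod k), b (Suc i mod k), c (Suc i mod k)}"
      show "u \<noteq> v"
      proof
        assume "u = v"
        then have "u \<in> {a (Suc i mod k), b (Suc i mod k), c (Suc i mod k)}" using v by simp
        then show False using disj[OF i s u] sne by simp
      qed
      show "(u,v)\<in>E \<or> (v,u)\<in>E" using adj[OF i s sne[symmetric] u v] .
    qed
    show ?thesis by (rule pl_cases[OF EV anti pl[OF i] ad])
  qed
  have dc: "DC E k a b c"
    by (unfold_locales) (use anti k2 adj disj inner step in \<open>blast+\<close>)
  show ?thesis
    using DC.ac_claim[OF dc assms(3), of "a t" "c t"] DC.ac_claim[OF dc assms(3), of "c t" "a t"]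
      DC.b_claim[OF dc assms(3)] by simp
qed


end
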